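(* Let $H$ be a connected graph with $k=|V(H)|>1$ vertices that does not contain two true twins. Then no deterministic online algorithm (without advice) solving the Delayed Connected $H$-Node-Deletion Problem has competitive ratio smaller than $k$.
   Context: All graphs are finite, simple and undirected. Two distinct vertices are true twins if they have the same closed neighborhood $N[v]=N(v)\cup\{v\}$ (in particular they are adjacent). An induced copy of $H$ in $G$ is an induced subgraph isomorphic to $H$; $G$ is $H$-free if it has none. An online graph $G$ has vertices $v_1,\dots,v_n$ revealed one at a time (with edges to earlier vertices); $G_t=G[\{v_1,\dots,v_t\}]$. Delayed Connected $H$-Node-Deletion Problem (for a fixed connected $H$): an online algorithm must choose sets $S_1\subseteq\dots\subseteq S_n$ with $S_t\subseteq V(G_t)$ and $G_t-S_t$ $H$-free for each $t$, where $S_t$ depends only on $G_t$; the cost is $|S_n|$. $\mathrm{OPT}(G)$ is the minimum size of $S\subseteq V(G)$ with $G-S$ $H$-free. An algorithm is $c$-competitive if there is a constant $\alpha\ge0$ with cost $\le c\cdot \mathrm{OPT}(G)+\alpha$ for every online graph $G$; its competitive ratio is the infimum of such $c\ge1$. *)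

theory Defs
  imports Complex_Main "HOL-Library.Extended_Real"
begin

definition simple_graph :: "('a \<Rightarrow> 'a \<Rightarrow> bool) \<Rightarrow> bool" where
  "simple_graph E \<longleftrightarrow> (\<forall>u v. E u v \<longrightarrow> E v u) \<and> (\<forall>v. \<not> E v v)"

definition connected_graph :: "'b set \<Rightarrow> ('b \<Rightarrow> 'b \<Rightarrow> bool) \<Rightarrow> bool" where
  "connected_graph V E \<longleftrightarrow> V \<noteq> {} \<and>
     (\<forall>u\<in>V. \<forall>v\<in>V. (\<lambda>x y. x \<in> V \<and> y \<in> V \<and> E x y)\<^sup>*\<^sup>* u v)"

definition closed_nbhd :: "'b set \<Rightarrow> ('b \<Rightarrow> 'b \<Rightarrow> bool) \<Rightarrow> 'b \<Rightarrow> 'b set" where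
  "closed_nbhd V E v = {w \<in> V. E v w} \<union> {v}"

definition true_twins :: "'b set \<Rightarrow> ('b \<Rightarrow> 'b \<Rightarrow> bool) \<Rightarrow> 'b \<Rightarrow> 'b \<Rightarrow> bool" where
  "true_twins V E u v \<longleftrightarrow> u \<in> V \<and> v \<in> V \<and> u \<noteq> v \<and> closed_nbhd V E u = closed_nbhd V E v"

definition has_induced_copy ::
  "'a set \<Rightarrow> ('a \<Rightarrow> 'a \<Rightarrow> bool) \<Rightarrow> 'b set \<Rightarrow> ('b \<Rightarrow> 'b \<Rightarrow> bool) \<Rightarrow> bool" where
  "has_induced_copy X E VH EH \<longleftrightarrow>
     (\<exists>f. inj_on f VH \<and> f ` VH \<subseteq> X \<and>
          (\<forall>u\<in>VH. \<forall>v\<in>VH. EH u v \<longleftrightarrow> E (f u) (f v)))"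

definition H_free :: "'a set \<Rightarrow> ('a \<Rightarrow> 'a \<Rightarrow> bool) \<Rightarrow> 'b set \<Rightarrow> ('b \<Rightarrow> 'b \<Rightarrow> bool) \<Rightarrow> bool" where
  "H_free X E VH EH \<longleftrightarrow> \<not> has_induced_copy X E VH EH"

(* Online graphs: vertices v_1,...,v_n are 0,...,n-1 (vertex i is revealed at time i+1);
   E is a simple graph; G_t is the induced subgraph on {0..<t}. *)
definition restr :: "nat \<Rightarrow> (nat \<Rightarrow> nat \<Rightarrow> bool) \<Rightarrow> nat \<Rightarrow> nat \<Rightarrow> bool" where
  "restr t E u v \<longleftrightarrow> u < t \<and> v < t \<and> E u v"

(* A deterministic online algorithm maps the currently revealed graph G_t (given as t and
   the edge relation restricted to {0..<t}) to the deletion set S_t; hence S_t depends only on G_t. *)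
type_synonym online_alg = "nat \<Rightarrow> (nat \<Rightarrow> nat \<Rightarrow> bool) \<Rightarrow> nat set"

definition alg_set :: "online_alg \<Rightarrow> (nat \<Rightarrow> nat \<Rightarrow> bool) \<Rightarrow> nat \<Rightarrow> nat set" where
  "alg_set A E t = A t (restr t E)"

definition valid_alg :: "'b set \<Rightarrow> ('b \<Rightarrow> 'b \<Rightarrow> bool) \<Rightarrow> online_alg \<Rightarrow> bool" where
  "valid_alg VH EH A \<longleftrightarrow>
     (\<forall>E t. simple_graph E \<longrightarrow>
        alg_set A E t \<subseteq> {0..<t} \<and>
        alg_set A E t \<subseteq> alg_set A E (Suc t) \<and>
        H_free ({0..<t} - alg_set A E t) E VH EH)"

definition alg_cost :: "online_alg \<Rightarrow> nat \<Rightarrow> (nat \<Rightarrow> nat \<Rightarrow> bool) \<Rightarrow> nat" where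
  "alg_cost A n E = card (alg_set A E n)"

definition OPT :: "'b set \<Rightarrow> ('b \<Rightarrow> 'b \<Rightarrow> bool) \<Rightarrow> nat \<Rightarrow> (nat \<Rightarrow> nat \<Rightarrow> bool) \<Rightarrow> nat" where
  "OPT VH EH n E = (LEAST m. \<exists>S. S \<subseteq> {0..<n} \<and> card S = m \<and> H_free ({0..<n} - S) E VH EH)"

definition competitive :: "'b set \<Rightarrow> ('b \<Rightarrow> 'b \<Rightarrow> bool) \<Rightarrow> online_alg \<Rightarrow> real \<Rightarrow> bool" where
  "competitive VH EH A c \<longleftrightarrow>
     (\<exists>\<alpha>\<ge>0. \<forall>n E. simple_graph E \<longrightarrow>
        real (alg_cost A n E) \<le> c * real (OPT VH EH n E) + \<alpha>)"

(* infimum of all c >= 1 such that A is c-competitive (= \<infinity> if there are none) *)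
definition competitive_ratio :: "'b set \<Rightarrow> ('b \<Rightarrow> 'b \<Rightarrow> bool) \<Rightarrow> online_alg \<Rightarrow> ereal" where
  "competitive_ratio VH EH A = Inf {ereal c | c. c \<ge> 1 \<and> competitive VH EH A c}"

end

theory Submission
  imports Defs
begin

definition Eg :: "(nat \<Rightarrow> 'b) \<Rightarrow> ('b \<Rightarrow> 'b \<Rightarrow> bool) \<Rightarrow> (nat \<Rightarrow> nat) \<Rightarrow> nat \<Rightarrow> nat \<Rightarrow> bool" where
  "Eg h EH g u v \<longleftrightarrow> u \<noteq> v \<and> (g u = g v \<or> EH (h (g u)) (h (g v)))"

fun clsl :: "online_alg \<Rightarrow> (nat \<Rightarrow> 'b) \<Rightarrow> ('b \<Rightarrow> 'b \<Rightarrow> bool) \<Rightarrow> nat \<Rightarrow> nat \<Rightarrow> nat list" where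
  "clsl A h EH k 0 = []"
| "clsl A h EH k (Suc t) = clsl A h EH k t @ [LEAST r. r < k \<and> (\<forall>s<t. clsl A h EH k t ! s = r \<longrightarrow>
       s \<in> A t (restr t (Eg h EH (\<lambda>s. clsl A h EH k t ! s))))]"

definition cls :: "online_alg \<Rightarrow> (nat \<Rightarrow> 'b) \<Rightarrow> ('b \<Rightarrow> 'b \<Rightarrow> bool) \<Rightarrow> nat \<Rightarrow> nat \<Rightarrow> nat" where
  "cls A h EH k s = clsl A h EH k (Suc s) ! s"

lemma length_clsl: "length (clsl A h EH k t) = t" by (induction t) auto

lemma clsl_nth: "s < t \<Longrightarrow> clsl A h EH k t ! s = cls A h EH k s"
proof (induction t)
  case 0 thus ?case by simp
next
  case (Suc t)
  show ?case
  proof (cases "s < t")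
    case True thus ?thesis using Suc by (simp add: nth_append length_clsl)
  next
    case False then have "s = t" using Suc.prems by simp
    thus ?thesis by (simp add: cls_def)
  qed
qed

lemma restr_cong: "(\<And>u v. u < t \<Longrightarrow> v < t \<Longrightarrow> E u v = E' u v) \<Longrightarrow> restr t E = restr t E'"
  by (auto simp: restr_def fun_eq_iff)

lemma cls_eq: "cls A h EH k t = (LEAST r. r < k \<and> (\<forall>s<t. cls A h EH k s = r \<longrightarrow>
    s \<in> alg_set A (Eg h EH (cls A h EH k)) t))"
proof -
  have r: "restr t (Eg h EH (\<lambda>s. clsl A h EH k t ! s)) = restr t (Eg h EH (cls A h EH k))"
    by (rule restr_cong) (simp add: Eg_def clsl_nth)
  have "cls A h EH k t = (LEAST r. r < k \<and> (\<forall>s<t. clsl A h EH k t ! s = r \<longrightarrow>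
       s \<in> A t (restr t (Eg h EH (\<lambda>s. clsl A h EH k t ! s)))))"
    by (simp add: cls_def nth_append length_clsl)
  also have "\<dots> = (LEAST r. r < k \<and> (\<forall>s<t. cls A h EH k s = r \<longrightarrow>
    s \<in> alg_set A (Eg h EH (cls A h EH k)) t))"
    unfolding r alg_set_def by (simp add: clsl_nth)
  finally show ?thesis .
qed

locale adv =
  fixes VH :: "'b set" and EH :: "'b \<Rightarrow> 'b \<Rightarrow> bool" and A :: online_alg
    and h :: "nat \<Rightarrow> 'b" and k :: nat
  assumes fin: "finite VH" and sg: "simple_graph EH" and noTT: "\<not> (\<exists>u v. true_twins VH EH u v)"
    and valid: "valid_alg VH EH A" and kdef: "k = card VH" and bij: "bij_betw h {0..<k} VH"
begin

lemma Eg_simple: "simple_graph (Eg h EH g)" using sg by (auto simp: simple_graph_def Eg_def)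

lemma exists_class: "\<exists>r<k. \<forall>s<t. g s = r \<longrightarrow> s \<in> alg_set A (Eg h EH g) t"
proof (rule ccontr)
  let ?E = "Eg h EH g" let ?S = "alg_set A ?E t"
  assume "\<not> ?thesis"
  then have "\<forall>r<k. \<exists>s. s<t \<and> g s = r \<and> s \<notin> ?S" by auto
  then obtain sel where sel: "\<And>r. r<k \<Longrightarrow> sel r < t \<and> g (sel r) = r \<and> sel r \<notin> ?S" by metis
  define f where "f = (\<lambda>v. sel (inv_into {0..<k} h v))"
  have iv: "\<And>v. v \<in> VH \<Longrightarrow> inv_into {0..<k} h v < k \<and> h (inv_into {0..<k} h v) = v"
    using bij by (metis atLeastLessThan_iff bij_betw_def bij_betw_inv_into_right inv_into_into)
  have gf: "\<And>v. v\<in>VH \<Longrightarrow> g (f v) = inv_into {0..<k} h v" using sel iv f_def by auto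
  have "has_induced_copy ({0..<t} - ?S) ?E VH EH"
    unfolding has_induced_copy_def
  proof (intro exI conjI)
    show "inj_on f VH"
    proof (rule inj_onI)
      fix x y assume "x \<in> VH" "y \<in> VH" "f x = f y"
      then have "inv_into {0..<k} h x = inv_into {0..<k} h y" using gf by metis
      then show "x = y" using iv \<open>x \<in> VH\<close> \<open>y \<in> VH\<close> by metis
    qed
    show "f ` VH \<subseteq> {0..<t} - ?S" using sel iv f_def by auto
    show "\<forall>u\<in>VH. \<forall>v\<in>VH. EH u v = ?E (f u) (f v)"
    proof (intro ballI)
      fix u v assume u: "u\<in>VH" and v: "v\<in>VH"
      show "EH u v = ?E (f u) (f v)"
      proof (cases "u = v")
        case True thus ?thesis using sg by (simp add: Eg_def simple_graph_def)
      next
        case False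
        then have "inv_into {0..<k} h u \<noteq> inv_into {0..<k} h v" using iv u v by metis
        then have g2: "g (f u) \<noteq> g (f v)" using gf u v by auto
        then have "f u \<noteq> f v" by auto
        thus ?thesis using g2 gf iv u v by (simp add: Eg_def)
      qed
    qed
  qed
  moreover have "H_free ({0..<t} - ?S) ?E VH EH" using valid Eg_simple unfolding valid_alg_def by blast
  ultimately show False unfolding H_free_def by blast
qed

abbreviation "cl \<equiv> cls A h EH k"
abbreviation "EE \<equiv> Eg h EH cl"

lemma cls_prop: "cl t < k \<and> (\<forall>s<t. cl s = cl t \<longrightarrow> s \<in> alg_set A EE t)"
proof -
  define P where "P = (\<lambda>r. r<k \<and> (\<forall>s<t. cl s = r \<longrightarrow> s \<in> alg_set A EE t))"
  define L where "L = (LEAST r. P r)"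
  have eq: "cl t = L" unfolding L_def P_def by (rule cls_eq)
  have ex: "\<exists>r. P r" unfolding P_def using exists_class by blast
  have "P L" unfolding L_def by (rule LeastI_ex[OF ex])
  then show ?thesis unfolding P_def eq by blast
qed

lemma mono_S: "t \<le> t' \<Longrightarrow> alg_set A EE t \<subseteq> alg_set A EE t'"
  using valid Eg_simple unfolding valid_alg_def by (metis lift_Suc_mono_le)

lemma cost: "n - k \<le> card (alg_set A EE n)"
proof -
  let ?S = "alg_set A EE n"
  have sub: "?S \<subseteq> {0..<n}" using valid Eg_simple unfolding valid_alg_def by blast
  have key: "x \<in> ?S" if xy: "x < y" "y < n" "cl x = cl y" for x y
  proof -
    have "x \<in> alg_set A EE y" using cls_prop[of y] xy by blast
    moreover have "alg_set A EE y \<subseteq> ?S" using mono_S[of y n] xy(2) by simp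
    ultimately show ?thesis by blast
  qed
  have inj: "inj_on cl ({0..<n} - ?S)"
  proof (rule inj_onI)
    fix x y assume x: "x \<in> {0..<n} - ?S" and y: "y \<in> {0..<n} - ?S" and eq: "cl x = cl y"
    show "x = y"
    proof (rule ccontr)
      assume "x \<noteq> y"
      then consider "x < y" | "y < x" by linarith
      thus False
    proof cases
        case 1 thus False using key[of x y] x y eq by simp
      next
        case 2 thus False using key[of y x] x y eq by simp
      qed
    qed
  qed
  have "cl ` ({0..<n} - ?S) \<subseteq> {0..<k}" using cls_prop by auto
  then have "card ({0..<n} - ?S) \<le> card {0..<k}" using card_inj_on_le[OF inj] finite_atLeastLessThan by blast
  then have c1: "card ({0..<n} - ?S) \<le> k" by simp
  have "card ({0..<n} - ?S) = card {0..<n} - card ?S"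
    by (rule card_Diff_subset[OF finite_subset[OF sub] sub]) simp
  then have "card ({0..<n} - ?S) = n - card ?S" by simp
  with c1 show ?thesis by linarith
qed

lemma opt_free:
  assumes r0: "r0 < k"
  shows "H_free ({0..<n} - {s. s<n \<and> cl s = r0}) EE VH EH"
  unfolding H_free_def has_induced_copy_def
proof
  assume "\<exists>f. inj_on f VH \<and> f ` VH \<subseteq> {0..<n} - {s. s<n \<and> cl s = r0} \<and> (\<forall>u\<in>VH. \<forall>v\<in>VH. EH u v = EE (f u) (f v))"
  then obtain f where inj: "inj_on f VH" and img: "f ` VH \<subseteq> {0..<n} - {s. s<n \<and> cl s = r0}"
    and ed: "\<forall>u\<in>VH. \<forall>v\<in>VH. EH u v = EE (f u) (f v)" by blast
  have im: "(cl \<circ> f) ` VH \<subseteq> {0..<k} - {r0}" using img cls_prop by auto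
  have "\<not> inj_on (cl \<circ> f) VH"
  proof
    assume "inj_on (cl \<circ> f) VH"
    then have "card VH \<le> card ({0..<k} - {r0})" using card_inj_on_le im by blast
    also have "\<dots> = k - 1" using r0 by simp
    finally show False using kdef r0 by linarith
  qed
  then obtain u v where u: "u\<in>VH" and v: "v\<in>VH" and uv: "u \<noteq> v" and eq: "cl (f u) = cl (f v)"
    unfolding inj_on_def by auto
  have fuv: "f u \<noteq> f v" using inj u v uv by (auto dest: inj_onD)
  have euv: "EH u v" using ed u v fuv eq by (simp add: Eg_def)
  have evu: "EH v u" using euv sg by (simp add: simple_graph_def)
  have oth: "EH u w = EH v w" if w: "w\<in>VH" "w \<noteq> u" "w \<noteq> v" for w
  proof -
    have "f w \<noteq> f u" "f w \<noteq> f v" using inj u v w by (auto dest: inj_onD)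
    then show "EH u w = EH v w" using ed u v w eq by (simp add: Eg_def)
  qed
  have "closed_nbhd VH EH u = closed_nbhd VH EH v"
    unfolding closed_nbhd_def using euv evu u v oth by auto
  then have "true_twins VH EH u v" using u v uv by (simp add: true_twins_def)
  thus False using noTT by blast
qed

lemma min_class:
  assumes k0: "k > 0"
  shows "\<exists>r0<k. k * card {s. s<n \<and> cl s = r0} \<le> n"
proof (rule ccontr)
  assume "\<not> ?thesis"
  then have lt: "\<And>r. r \<in> {0..<k} \<Longrightarrow> n < k * card {s. s<n \<and> cl s = r}" by auto
  have part: "{0..<n} = (\<Union>r\<in>{0..<k}. {s. s<n \<and> cl s = r})" using cls_prop by auto
  have "card {0..<n} = (\<Sum>r\<in>{0..<k}. card {s. s<n \<and> cl s = r})"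
    unfolding part by (rule card_UN_disjoint) auto
  then have "k * n = (\<Sum>r\<in>{0..<k}. k * card {s. s<n \<and> cl s = r})" by (metis card_atLeastLessThan diff_zero sum_distrib_left)
  moreover have "(\<Sum>r\<in>{0..<k}. n) < (\<Sum>r\<in>{0..<k}. k * card {s. s<n \<and> cl s = r})"
    by (rule sum_strict_mono) (use lt k0 in auto)
  ultimately show False by simp
qed

end

theorem mainTheorem5:
  fixes VH :: "'b set" and EH :: "'b \<Rightarrow> 'b \<Rightarrow> bool" and A :: online_alg
  assumes "finite VH" and "simple_graph EH" and "connected_graph VH EH"
    and "card VH > 1"
    and "\<not> (\<exists>u v. true_twins VH EH u v)"
    and "valid_alg VH EH A"
  shows "competitive_ratio VH EH A \<ge> ereal (real (card VH))"
proof -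
  define k where "k = card VH"
  obtain h where bij: "bij_betw h {0..<k} VH" using ex_bij_betw_nat_finite[OF assms(1)] k_def by metis
  interpret adv VH EH A h k
    using assms bij k_def by unfold_locales auto
  have k1: "k > 1" using assms k_def by simp
  show ?thesis unfolding competitive_ratio_def
  proof (rule Inf_greatest)
    fix x assume "x \<in> {ereal c | c. c\<ge>1 \<and> competitive VH EH A c}"
    then obtain cc where x: "x = ereal cc" and c1: "cc \<ge> 1" and comp: "competitive VH EH A cc" by blast
    have "real k \<le> cc"
    proof (rule ccontr)
      assume "\<not> real k \<le> cc" then have ck: "cc < real k" by simp
      from comp obtain \<alpha> where a0: "\<alpha> \<ge> 0" and bound: "\<forall>n E. simple_graph E \<longrightarrow>
         real (alg_cost A n E) \<le> cc * real (OPT VH EH n E) + \<alpha>" unfolding competitive_def by blast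
      obtain n :: nat where n: "real n > real k * (real k + \<alpha>) / (real k - cc)"
        using reals_Archimedean2 by blast
      obtain r0 where r0: "r0 < k" "k * card {s. s<n \<and> cls A h EH k s = r0} \<le> n"
        using min_class k1 by auto
      let ?C = "{s. s<n \<and> cls A h EH k s = r0}"
      let ?E = "Eg h EH (cls A h EH k)"
      have opt: "OPT VH EH n ?E \<le> card ?C"
        unfolding OPT_def
      proof (rule Least_le)
        show "\<exists>S. S \<subseteq> {0..<n} \<and> card S = card ?C \<and> H_free ({0..<n} - S) ?E VH EH"
          by (rule exI[of _ ?C]) (use opt_free[OF r0(1), of n] in auto)
      qed
      have cst: "n - k \<le> alg_cost A n ?E" using cost by (simp add: alg_cost_def)
      have b: "real (alg_cost A n ?E) \<le> cc * real (OPT VH EH n ?E) + \<alpha>" using bound Eg_simple by blast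
      have r1: "real n - real k \<le> real (alg_cost A n ?E)" using cst by linarith
      have "real (k * card ?C) \<le> real n" using r0(2) of_nat_le_iff by blast
      hence r2: "real k * real (card ?C) \<le> real n" by simp
      have r3: "cc * real (OPT VH EH n ?E) \<le> cc * real (card ?C)"
        using opt c1 by (intro mult_left_mono) auto
      have kp: "real k > 0" using k1 by simp
      have r4: "cc * (real k * real (card ?C)) \<le> cc * real n"
        using r2 c1 by (intro mult_left_mono) auto
      have "real n - real k \<le> cc * real (card ?C) + \<alpha>" using r1 b r3 by linarith
      hence "real k * (real n - real k) \<le> real k * (cc * real (card ?C) + \<alpha>)"
        using kp by (intro mult_left_mono) auto
      also have "\<dots> = cc * (real k * real (card ?C)) + real k * \<alpha>" by (simp add: algebra_simps)
      also have "\<dots> \<le> cc * real n + real k * \<alpha>" using r4 by linarith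
      finally have "real k * (real n - real k) \<le> cc * real n + real k * \<alpha>" .
      then have "real n * (real k - cc) \<le> real k * (real k + \<alpha>)" by (simp add: algebra_simps)
      moreover have "real k * (real k + \<alpha>) < real n * (real k - cc)"
        using n ck by (simp add: pos_divide_less_eq)
      ultimately show False by linarith
    qed
    thus "ereal (real (card VH)) \<le> x" using x k_def by simp
  qed
qed

end
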